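(* Let $W$ be a cocompact discrete reflection group of a CAT(0) space $X$, let $C$ be a chamber, and let $S$ be a minimal subset of the set $R$ of reflections in $W$ such that $C=\bigcap_{s\in S}X_s^+$. Let $w\in W$, let $w=s_1\cdots s_l$ be a reduced representation ($s_i\in S$, $l=\ell(w)$), and let $T=\{s_1,\dots,s_l\}$. Then $$\overline{C}\cap w\overline{C}=\bigcap_{t\in T}(F_t\cap\overline{C})=\bigcap_{t\in T}(t\overline{C}\cap\overline{C})=\bigcap_{v\in W_T}v\overline{C}.$$
   Context: An isometry $r$ of a geodesic space $X$ is a reflection if $r^2=\mathrm{id}$, the fixed-point set $F_r$ (the wall of $r$) has empty interior, $X\setminus F_r$ has exactly two convex connected components, and $r$ interchanges them. A reflection group is an isometry group generated by reflections. Let $W$ be a reflection group of $X$ acting properly (i.e. $\{\gamma\in W: \gamma x\in B(x,N)\}$ is finite for all $x\in X$, $N>0$), and $R$ the set of all reflections of $X$ lying in $W$. A chamber is a connected component $C$ of $X\setminus\bigcup_{r\in R}F_r$. $W$ is a cocompact discrete reflection group if $\overline{C}$ is compact and $\{\gamma\in W: \gamma C=C\}=\{1\}$. For $r\in R$, $X_r^+$ denotes the component of $X\setminus F_r$ containing $C$. $S\subset R$ is minimal with $C=\bigcap_{s\in S}X_s^+$; then $(W,S)$ is a Coxeter system, and $\ell$ is word length with respect to $S$. For $T\subset S$, $W_T$ is the subgroup generated by $T$. *)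

theory Defs
  imports "HOL-Analysis.Analysis"
begin

text \<open>The space X is the whole type 'a with its metric.\<close>

definition geodesic_seg :: "(real \<Rightarrow> 'a::metric_space) \<Rightarrow> 'a \<Rightarrow> 'a \<Rightarrow> bool" where
  "geodesic_seg g x y \<longleftrightarrow> g 0 = x \<and> g (dist x y) = y \<and>
     (\<forall>s\<in>{0..dist x y}. \<forall>t\<in>{0..dist x y}. dist (g s) (g t) = \<bar>s - t\<bar>)"

definition geodesic_space :: "'a::metric_space itself \<Rightarrow> bool" where
  "geodesic_space TYPE('a) \<longleftrightarrow> (\<forall>x y::'a. \<exists>g. geodesic_seg g x y)"

text \<open>Comparison point on the Euclidean segment from p' to q' at distance s from p'
  (the Euclidean plane is modelled by complex).\<close>
definition cmp_pt :: "complex \<Rightarrow> complex \<Rightarrow> real \<Rightarrow> complex" where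
  "cmp_pt p' q' s = p' + of_real (s / dist p' q') * (q' - p')"

text \<open>Pairs (point on the geodesic triangle, its comparison point).\<close>
definition tri_pairs ::
  "'a::metric_space \<Rightarrow> 'a \<Rightarrow> 'a \<Rightarrow> (real \<Rightarrow> 'a) \<Rightarrow> (real \<Rightarrow> 'a) \<Rightarrow> (real \<Rightarrow> 'a)
   \<Rightarrow> complex \<Rightarrow> complex \<Rightarrow> complex \<Rightarrow> ('a \<times> complex) set" where
  "tri_pairs p q r g1 g2 g3 p' q' r' =
     (\<lambda>s. (g1 s, cmp_pt p' q' s)) ` {0..dist p q} \<union>
     (\<lambda>s. (g2 s, cmp_pt q' r' s)) ` {0..dist q r} \<union>
     (\<lambda>s. (g3 s, cmp_pt r' p' s)) ` {0..dist r p}"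

definition CAT0 :: "'a::metric_space itself \<Rightarrow> bool" where
  "CAT0 TYPE('a) \<longleftrightarrow> geodesic_space TYPE('a) \<and>
    (\<forall>(p::'a) q r g1 g2 g3 p' q' r'.
       geodesic_seg g1 p q \<and> geodesic_seg g2 q r \<and> geodesic_seg g3 r p \<and>
       dist p' q' = dist p q \<and> dist q' r' = dist q r \<and> dist r' p' = dist r p \<longrightarrow>
       (\<forall>(x, x')\<in>tri_pairs p q r g1 g2 g3 p' q' r'.
        \<forall>(y, y')\<in>tri_pairs p q r g1 g2 g3 p' q' r'. dist x y \<le> dist x' y'))"

definition gconvex :: "'a::metric_space set \<Rightarrow> bool" where
  "gconvex A \<longleftrightarrow> (\<forall>x\<in>A. \<forall>y\<in>A. \<forall>g. geodesic_seg g x y \<longrightarrow> g ` {0..dist x y} \<subseteq> A)"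

definition isometry :: "('a::metric_space \<Rightarrow> 'a) \<Rightarrow> bool" where
  "isometry f \<longleftrightarrow> bij f \<and> (\<forall>x y. dist (f x) (f y) = dist x y)"

definition fixset :: "('a \<Rightarrow> 'a) \<Rightarrow> 'a set" where
  "fixset r = {x. r x = x}"

definition reflection :: "('a::metric_space \<Rightarrow> 'a) \<Rightarrow> bool" where
  "reflection r \<longleftrightarrow> isometry r \<and> r \<circ> r = id \<and> interior (fixset r) = {} \<and>
     (\<exists>A B. components (- fixset r) = {A, B} \<and> A \<noteq> B \<and> gconvex A \<and> gconvex B \<and>
            r ` A = B \<and> r ` B = A)"

inductive_set gen_group :: "('a \<Rightarrow> 'a) set \<Rightarrow> ('a \<Rightarrow> 'a) set" for G where
  gen_id: "id \<in> gen_group G"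
| gen_mult: "g \<in> G \<Longrightarrow> w \<in> gen_group G \<Longrightarrow> g \<circ> w \<in> gen_group G"
| gen_inv: "g \<in> G \<Longrightarrow> w \<in> gen_group G \<Longrightarrow> inv g \<circ> w \<in> gen_group G"

definition reflection_group :: "('a::metric_space \<Rightarrow> 'a) set \<Rightarrow> bool" where
  "reflection_group W \<longleftrightarrow> (\<exists>G. (\<forall>g\<in>G. reflection g) \<and> W = gen_group G)"

definition acts_properly :: "('a::metric_space \<Rightarrow> 'a) set \<Rightarrow> bool" where
  "acts_properly W \<longleftrightarrow> (\<forall>x. \<forall>N>0. finite {g\<in>W. g x \<in> ball x N})"

definition refls :: "('a::metric_space \<Rightarrow> 'a) set \<Rightarrow> ('a \<Rightarrow> 'a) set" where
  "refls W = {r\<in>W. reflection r}"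

definition chamber :: "('a::metric_space \<Rightarrow> 'a) set \<Rightarrow> 'a set \<Rightarrow> bool" where
  "chamber W C \<longleftrightarrow> C \<in> components (- (\<Union>r\<in>refls W. fixset r))"

definition cocompact_discrete_refl_group :: "('a::metric_space \<Rightarrow> 'a) set \<Rightarrow> 'a set \<Rightarrow> bool" where
  "cocompact_discrete_refl_group W C \<longleftrightarrow> reflection_group W \<and> acts_properly W \<and> chamber W C \<and>
     compact (closure C) \<and> {g\<in>W. g ` C = C} = {id}"

text \<open>X_r^+ : the component of X - F_r containing C.\<close>
definition halfspace :: "('a::metric_space \<Rightarrow> 'a) \<Rightarrow> 'a set \<Rightarrow> 'a set" where
  "halfspace r C = \<Union>{K\<in>components (- fixset r). C \<subseteq> K}"

definition minimal_gens :: "('a::metric_space \<Rightarrow> 'a) set \<Rightarrow> 'a set \<Rightarrow> ('a \<Rightarrow> 'a) set \<Rightarrow> bool" where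
  "minimal_gens W C S \<longleftrightarrow> S \<subseteq> refls W \<and> C = (\<Inter>s\<in>S. halfspace s C) \<and>
     (\<forall>S'. S' \<subset> S \<longrightarrow> C \<noteq> (\<Inter>s\<in>S'. halfspace s C))"

definition compose_list :: "('a \<Rightarrow> 'a) list \<Rightarrow> 'a \<Rightarrow> 'a" where
  "compose_list ss = foldr (\<circ>) ss id"

definition word_length :: "('a \<Rightarrow> 'a) set \<Rightarrow> ('a \<Rightarrow> 'a) \<Rightarrow> nat" where
  "word_length S w = (LEAST n. \<exists>ss. length ss = n \<and> set ss \<subseteq> S \<and> compose_list ss = w)"

end

theory Submission
  imports Defs
begin


lemma isometry_cont: "isometry f \<Longrightarrow> continuous_on UNIV f"
  unfolding isometry_def continuous_on_iff by (metis UNIV_I)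

lemma isometry_contat: "isometry f \<Longrightarrow> continuous (at x) f"
  using isometry_cont continuous_on_eq_continuous_within by blast

lemma isometry_comp: "isometry f \<Longrightarrow> isometry g \<Longrightarrow> isometry (f \<circ> g)"
  unfolding isometry_def using bij_comp by auto

lemma isometry_inv: "isometry f \<Longrightarrow> isometry (inv f)"
  unfolding isometry_def
  by (metis bij_betw_imp_surj_on bij_imp_bij_inv surj_f_inv_f)

lemma isometry_id: "isometry id"
  unfolding isometry_def by auto

lemma fixset_closed: "isometry f \<Longrightarrow> closed (fixset f)"
  unfolding fixset_def using closed_Collect_eq[OF isometry_cont continuous_on_id] by blast

lemma geodesic_cont: "geodesic_seg g x y \<Longrightarrow> continuous_on {0..dist x y} g"
  unfolding geodesic_seg_def continuous_on_iff
  by (metis abs_minus_commute dist_real_def)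

lemma ball_connected:
  assumes "geodesic_space TYPE('a::metric_space)"
  shows "connected (ball (z::'a) e)"
proof -
  have "\<forall>q. \<exists>g. geodesic_seg g z q" using assms unfolding geodesic_space_def by blast
  then obtain G where G: "\<And>q. geodesic_seg (G q) z q" by metis
  define K where "K = (\<lambda>q. G q ` {0..dist z q}) ` ball z e"
  have sub: "k \<subseteq> ball z e" if kK: "k \<in> K" for k
  proof -
    obtain q where q: "q \<in> ball z e" "k = G q ` {0..dist z q}" using kK unfolding K_def by blast
    have "dist z (G q t) < e" if "t \<in> {0..dist z q}" for t
    proof -
      have "dist z (G q t) = dist (G q 0) (G q t)" using G[of q] unfolding geodesic_seg_def by simp
      also have "\<dots> = t" using G[of q] that unfolding geodesic_seg_def by auto
      finally show ?thesis using that q by auto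
    qed
    then show ?thesis using q by auto
  qed
  have "ball z e = \<Union>K"
  proof
    show "ball z e \<subseteq> \<Union>K"
    proof
      fix q assume q: "q \<in> ball z e"
      have "q = G q (dist z q)" using G[of q] unfolding geodesic_seg_def by simp
      then show "q \<in> \<Union>K" unfolding K_def using q by force
    qed
  qed (use sub in blast)
  moreover have "connected (\<Union>K)"
  proof (cases "K = {}")
    case True then show ?thesis by simp
  next
    case False
    have "z \<in> \<Inter>K"
    proof
      fix k assume "k \<in> K"
      then obtain q where q: "k = G q ` {0..dist z q}" using K_def by auto
      have "G q 0 = z" using G[of q] unfolding geodesic_seg_def by simp
      then show "z \<in> k" using q by force
    qed
    moreover have "connected k" if "k \<in> K" for k
      using that unfolding K_def
      by (auto intro!: connected_continuous_image geodesic_cont G)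
    ultimately show ?thesis by (intro connected_Union) auto
  qed
  ultimately show ?thesis by simp
qed

lemma components_open:
  assumes "geodesic_space TYPE('a::metric_space)" "open (Op::'a set)" "K \<in> components Op"
  shows "open K"
  unfolding open_contains_ball
proof
  fix x assume x: "x \<in> K"
  then have "x \<in> Op" using assms in_components_subset by blast
  then obtain e where e: "e > 0" "ball x e \<subseteq> Op" using assms(2) open_contains_ball by blast
  have "ball x e \<subseteq> K"
    using components_maximal[OF assms(3) ball_connected[OF assms(1)] e(2)] x e(1)
    by (metis centre_in_ball disjoint_iff)
  then show "\<exists>e>0. ball x e \<subseteq> K" using e by blast
qed

lemma components_homeo:
  assumes h: "isometry h"
  shows "components (h ` P) = (\<lambda>K. h ` K) ` components P"
proof -
  have gen: "h ` K \<in> components (h ` P)" if h: "isometry h" and K: "K \<in> components P" for h :: "'a \<Rightarrow> 'a" and K P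
  proof -
    have bh: "bij h" using h isometry_def by blast
    have ci: "continuous_on X (inv h)" for X using isometry_cont[OF isometry_inv[OF h]]
      by (meson continuous_on_subset subset_UNIV)
    have ch: "continuous_on X h" for X using isometry_cont[OF h]
      by (meson continuous_on_subset subset_UNIV)
    have ih: "inv h ` h ` X = X" for X using bh by (simp add: bij_is_inj image_inv_f_f)
    have hi: "h ` inv h ` X = X" for X using bh by (simp add: bij_is_surj image_f_inv_f)
    show ?thesis unfolding in_components_maximal
    proof (intro conjI allI impI)
      show "h ` K \<noteq> {}" using K in_components_nonempty by blast
      show "h ` K \<subseteq> h ` P" using K in_components_subset by blast
      show "connected (h ` K)" using K in_components_connected connected_continuous_image ch by blast
      fix D assume D: "D \<noteq> {} \<and> h ` K \<subseteq> D \<and> D \<subseteq> h ` P \<and> connected D"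
      have "inv h ` D = K"
        using K unfolding in_components_maximal
        by (metis D ci connected_continuous_image ih image_is_empty image_mono)
      then show "D = h ` K" using hi by metis
    qed
  qed
  show ?thesis
  proof
    show "(\<lambda>K. h ` K) ` components P \<subseteq> components (h ` P)" using gen[OF h] by blast
    show "components (h ` P) \<subseteq> (\<lambda>K. h ` K) ` components P"
    proof
      fix K assume K: "K \<in> components (h ` P)"
      have bh: "bij h" using h isometry_def by blast
      have "inv h ` K \<in> components (inv h ` h ` P)" using gen[OF isometry_inv[OF h] K] .
      moreover have "inv h ` h ` P = P" using bh by (simp add: bij_is_inj image_inv_f_f)
      moreover have "h ` inv h ` K = K" using bh by (simp add: bij_is_surj image_f_inv_f)
      ultimately show "K \<in> (\<lambda>K. h ` K) ` components P" by (metis image_eqI)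
    qed
  qed
qed



lemma refl_iso: "reflection r \<Longrightarrow> isometry r"
  unfolding reflection_def by blast

lemma refl_invol: "reflection r \<Longrightarrow> r (r x) = x"
  unfolding reflection_def by (metis comp_apply id_apply)

lemma refl_inv: "reflection r \<Longrightarrow> inv r = r"
  by (metis inv_unique_comp reflection_def)

lemma refl_parts:
  assumes geo: "geodesic_space TYPE('a::metric_space)" and r: "reflection (r::'a\<Rightarrow>'a)"
  obtains A B where "components (- fixset r) = {A, B}" "A \<noteq> B" "A \<inter> B = {}"
    "open A" "open B" "gconvex A" "gconvex B" "r ` A = B" "r ` B = A" "A \<union> B = - fixset r"
    "A \<noteq> {}" "B \<noteq> {}"
proof -
  obtain A B where AB: "components (- fixset r) = {A, B}" "A \<noteq> B" "gconvex A" "gconvex B"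
     "r ` A = B" "r ` B = A" using r unfolding reflection_def by (elim conjE exE) (rule that, assumption+)
  have op: "open (- fixset r)" using fixset_closed[OF refl_iso[OF r]] by auto
  have Ac: "A \<in> components (- fixset r)" and Bc: "B \<in> components (- fixset r)" using AB(1) by auto
  have "A \<inter> B = {}" using components_nonoverlap[OF Ac Bc] AB(2) by simp
  moreover have "open A" "open B" using components_open[OF geo op Ac] components_open[OF geo op Bc] by auto
  moreover have "A \<union> B = - fixset r" using Union_components[of "- fixset r"] AB(1) by simp
  moreover have "A \<noteq> {}" "B \<noteq> {}" using in_components_nonempty Ac Bc by auto
  ultimately show ?thesis using AB by (intro that[of A B])
qed

lemma gconvex_iso:
  assumes h: "isometry h" and A: "gconvex A"
  shows "gconvex (h ` A)"
  unfolding gconvex_def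
proof (intro ballI allI impI)
  fix x y g assume x: "x \<in> h ` A" and y: "y \<in> h ` A" and g: "geodesic_seg g x y"
  obtain a b where ab: "a \<in> A" "b \<in> A" "x = h a" "y = h b" using x y by blast
  have bh: "bij h" and dh: "\<And>u v. dist (h u) (h v) = dist u v" using h isometry_def by auto
  have ih: "inv h (h u) = u" for u using bh by (simp add: bij_is_inj)
  have hi: "h (inv h u) = u" for u using bh by (simp add: bij_is_surj surj_f_inv_f)
  have dxy: "dist x y = dist a b" using ab dh by simp
  have "geodesic_seg (inv h \<circ> g) a b"
    unfolding geodesic_seg_def
  proof (intro conjI ballI)
    show "(inv h \<circ> g) 0 = a" using g ab ih unfolding geodesic_seg_def by simp
    show "(inv h \<circ> g) (dist a b) = b" using g ab ih dxy unfolding geodesic_seg_def by simp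
    fix s t assume "s \<in> {0..dist a b}" "t \<in> {0..dist a b}"
    then show "dist ((inv h \<circ> g) s) ((inv h \<circ> g) t) = \<bar>s - t\<bar>"
      using g dxy dh[of "inv h (g s)" "inv h (g t)"] hi unfolding geodesic_seg_def by simp
  qed
  then have "(inv h \<circ> g) ` {0..dist a b} \<subseteq> A" using A ab unfolding gconvex_def by blast
  then show "g ` {0..dist x y} \<subseteq> h ` A"
  proof (intro image_subsetI)
    fix t assume "(inv h \<circ> g) ` {0..dist a b} \<subseteq> A" "t \<in> {0..dist x y}"
    then have "inv h (g t) \<in> A" using dxy by auto
    then show "g t \<in> h ` A" using hi by (metis image_eqI)
  qed
qed

lemma fixset_conj: assumes bh: "bij h" shows "fixset (h \<circ> r \<circ> inv h) = h ` fixset r"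
proof -
  have ih: "inv h (h u) = u" for u using bh by (simp add: bij_is_inj)
  have hi: "h (inv h u) = u" for u using bh by (simp add: bij_is_surj surj_f_inv_f)
  show ?thesis unfolding fixset_def
  proof safe
    fix x assume "(h \<circ> r \<circ> inv h) x = x"
    then have "h (r (inv h x)) = x" by simp
    then have "inv h (h (r (inv h x))) = inv h x" by simp
    then have "r (inv h x) = inv h x" using ih by simp
    then have "inv h x \<in> {x. r x = x}" by simp
    then have "h (inv h x) \<in> h ` {x. r x = x}" by (rule imageI)
    then show "x \<in> h ` {x. r x = x}" using hi by simp
  next
    fix x assume "r x = x" then show "(h \<circ> r \<circ> inv h) (h x) = h x" using ih by simp
  qed
qed

lemma interior_iso:
  assumes h: "isometry h" and F: "interior F = {}"
  shows "interior (h ` F) = {}"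
proof (rule ccontr)
  assume "interior (h ` F) \<noteq> {}"
  then obtain x where x: "x \<in> interior (h ` F)" by blast
  have bh: "bij h" using h isometry_def by blast
  let ?T = "interior (h ` F)"
  have "open (h -` ?T)" using continuous_open_vimage[OF open_interior isometry_contat[OF h]] .
  moreover have "h -` ?T \<subseteq> F"
  proof
    fix y assume "y \<in> h -` ?T"
    then have "h y \<in> h ` F" using interior_subset[of "h ` F"] by auto
    then show "y \<in> F" using bh by (simp add: bij_is_inj inj_image_mem_iff)
  qed
  moreover have "inv h x \<in> h -` ?T" using x bh by (simp add: bij_is_surj surj_f_inv_f)
  ultimately have "h -` ?T \<subseteq> interior F" using interior_maximal by simp
  then show False using F \<open>inv h x \<in> h -` ?T\<close> by blast
qed

lemma refl_conj:
  assumes r: "reflection r" and h: "isometry h"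
  shows "reflection (h \<circ> r \<circ> inv h)"
proof -
  have bh: "bij h" using h isometry_def by blast
  have ih: "inv h (h u) = u" for u using bh by (simp add: bij_is_inj)
  have hi: "h (inv h u) = u" for u using bh by (simp add: bij_is_surj surj_f_inv_f)
  obtain A B where AB: "components (- fixset r) = {A, B}" "A \<noteq> B" "gconvex A" "gconvex B"
     "r ` A = B" "r ` B = A" using r unfolding reflection_def by (elim conjE exE) (rule that, assumption+)
  have iso: "isometry (h \<circ> r \<circ> inv h)"
    by (intro isometry_comp h refl_iso[OF r] isometry_inv)
  have inv2: "(h \<circ> r \<circ> inv h) \<circ> (h \<circ> r \<circ> inv h) = id"
    using refl_invol[OF r] ih hi by (auto simp: fun_eq_iff)
  have fx: "fixset (h \<circ> r \<circ> inv h) = h ` fixset r" using fixset_conj[OF bh] .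
  have int: "interior (fixset (h \<circ> r \<circ> inv h)) = {}"
  proof -
    have "interior (fixset r) = {}" using r unfolding reflection_def by blast
    then show ?thesis using fx interior_iso[OF h] by simp
  qed
  have cmp: "- fixset (h \<circ> r \<circ> inv h) = h ` (- fixset r)"
    using fx bh by (simp add: bij_image_Compl_eq)
  have comps: "components (- fixset (h \<circ> r \<circ> inv h)) = {h ` A, h ` B}"
    using cmp components_homeo[OF h, of "- fixset r"] AB by simp
  have ne: "h ` A \<noteq> h ` B" using AB bh by (simp add: bij_is_inj inj_image_eq_iff)
  have e: "(h \<circ> r \<circ> inv h) ` (h ` X) = h ` (r ` X)" for X
    using ih by (simp add: image_image)
  have sw1: "(h \<circ> r \<circ> inv h) ` (h ` A) = h ` B" using AB e by simp
  have sw2: "(h \<circ> r \<circ> inv h) ` (h ` B) = h ` A" using AB e by simp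
  show ?thesis unfolding reflection_def
    apply (intro conjI iso inv2 int)
    apply (rule exI[of _ "h ` A"], rule exI[of _ "h ` B"])
    using comps ne sw1 sw2 gconvex_iso[OF h AB(3)] gconvex_iso[OF h AB(4)] by simp
qed



lemma gen_group_comp: "u \<in> gen_group G \<Longrightarrow> v \<in> gen_group G \<Longrightarrow> u \<circ> v \<in> gen_group G"
  by (induction u rule: gen_group.induct) (auto simp: comp_assoc intro: gen_group.intros)

lemma gen_group_gen: "g \<in> G \<Longrightarrow> g \<in> gen_group G"
  using gen_group.gen_mult[OF _ gen_group.gen_id] by fastforce

lemma gen_group_iso: assumes G: "\<forall>g\<in>G. reflection g" shows "u \<in> gen_group G \<Longrightarrow> isometry u"
proof (induction u rule: gen_group.induct)
  case gen_id then show ?case by (rule isometry_id)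
next
  case (gen_mult g w) then show ?case using G isometry_comp refl_iso by blast
next
  case (gen_inv g w) then show ?case using G isometry_comp isometry_inv refl_iso by blast
qed

lemma gen_group_inv: assumes G: "\<forall>g\<in>G. reflection g" shows "u \<in> gen_group G \<Longrightarrow> inv u \<in> gen_group G"
proof (induction u rule: gen_group.induct)
  case gen_id then show ?case using gen_group.gen_id inv_id by metis
next
  case (gen_mult g w)
  have "inv (g \<circ> w) = inv w \<circ> g"
    using o_inv_distrib[of g w] gen_group_iso[OF G gen_mult.hyps(2)] G gen_mult.hyps(1)
    by (metis isometry_def refl_iso refl_inv)
  then show ?case using gen_mult gen_group_comp gen_group_gen by metis
next
  case (gen_inv g w)
  have "inv g = g" using G gen_inv.hyps(1) refl_inv by blast
  have "inv (g \<circ> w) = inv w \<circ> g"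
    using o_inv_distrib[of g w] gen_group_iso[OF G gen_inv.hyps(2)] G gen_inv.hyps(1)
    by (metis isometry_def refl_iso refl_inv)
  then show ?case using gen_inv gen_group_comp gen_group_gen \<open>inv g = g\<close> by metis
qed

lemma gen_group_fix: assumes G: "\<forall>g\<in>G. reflection g" "\<forall>g\<in>G. g x = x"
  shows "u \<in> gen_group G \<Longrightarrow> u x = x"
proof (induction u rule: gen_group.induct)
  case (gen_inv g w)
  then have "inv g = g" using G refl_inv by blast
  then show ?case using gen_inv G by simp
qed (use G in auto)

lemma compose_list_Cons: "compose_list (s # ss) = s \<circ> compose_list ss"
  by (simp add: compose_list_def)

lemma compose_list_Nil: "compose_list [] = id"
  by (simp add: compose_list_def)

lemma compose_list_append: "compose_list (xs @ ys) = compose_list xs \<circ> compose_list ys"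
  by (induction xs) (auto simp: compose_list_def comp_assoc)

lemma compose_list_fix: "\<forall>t\<in>set ss. t x = x \<Longrightarrow> compose_list ss x = x"
  by (induction ss) (auto simp: compose_list_def)

lemma word_length_le: "set l \<subseteq> S \<Longrightarrow> compose_list l = w \<Longrightarrow> word_length S w \<le> length l"
  unfolding word_length_def by (rule Least_le) blast

locale rg =
  fixes W :: "('a::metric_space \<Rightarrow> 'a) set" and C :: "'a set" and S :: "('a \<Rightarrow> 'a) set"
  assumes geo: "geodesic_space TYPE('a)"
    and cd: "cocompact_discrete_refl_group W C"
    and mg: "minimal_gens W C S"
begin

definition "U = (\<Union>r\<in>refls W. fixset r)"
definition "Hp s = halfspace s C"

lemma W_gen: obtains G where "\<forall>g\<in>G. reflection g" "W = gen_group G"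
  using cd unfolding cocompact_discrete_refl_group_def reflection_group_def by blast

lemma W_iso: "w \<in> W \<Longrightarrow> isometry w"
  using W_gen gen_group_iso by metis

lemma W_comp: "u \<in> W \<Longrightarrow> v \<in> W \<Longrightarrow> u \<circ> v \<in> W"
  using W_gen gen_group_comp by metis

lemma W_inv: "u \<in> W \<Longrightarrow> inv u \<in> W"
  using W_gen gen_group_inv by metis

lemma W_id: "id \<in> W"
  using W_gen gen_group.gen_id by metis

lemma S_refls: "s \<in> S \<Longrightarrow> s \<in> refls W"
  using mg unfolding minimal_gens_def by blast

lemma refls_W: "r \<in> refls W \<Longrightarrow> r \<in> W \<and> reflection r"
  unfolding refls_def by blast

lemma C_comp: "C \<in> components (- U)"
  using cd unfolding cocompact_discrete_refl_group_def chamber_def U_def by blast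

lemma C_ne: "C \<noteq> {}" using C_comp in_components_nonempty by blast
lemma C_conn: "connected C" using C_comp in_components_connected by blast
lemma C_sub: "C \<subseteq> - U" using C_comp in_components_subset by blast

lemma C_eq: "C = (\<Inter>s\<in>S. Hp s)"
  using mg unfolding minimal_gens_def Hp_def by blast

lemma W_pres: assumes g: "g \<in> W" and q: "q \<notin> U" shows "g q \<notin> U"
proof
  assume "g q \<in> U"
  then obtain r where r: "r \<in> refls W" "r (g q) = g q" unfolding U_def fixset_def by blast
  have bg: "bij g" using W_iso[OF g] isometry_def by blast
  have ig: "inv g (g u) = u" for u using bg by (simp add: bij_is_inj)
  let ?r = "inv g \<circ> r \<circ> inv (inv g)"
  have e: "inv (inv g) = g" using bg by (simp add: inv_inv_eq)
  have "reflection ?r" using refl_conj[OF _ W_iso[OF W_inv[OF g]]] refls_W[OF r(1)] by blast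
  moreover have "inv g \<circ> r \<circ> g \<in> W" using refls_W[OF r(1)] by (intro W_comp W_inv g) auto
  moreover note e
  moreover have "?r q = q" using e r ig by simp
  ultimately have "q \<in> U" unfolding U_def refls_def fixset_def by force
  then show False using q by blast
qed

lemma W_image_C: assumes g: "g \<in> W" shows "g ` C \<subseteq> - U"
  using W_pres[OF g] C_sub by blast

lemma W_chamber: assumes g: "g \<in> W" and q: "q \<in> C" "g q \<in> C" shows "g = id"
proof -
  have cont: "continuous_on X h" if "h \<in> W" for h X
    using isometry_cont[OF W_iso[OF that]] continuous_on_subset by blast
  have bg: "bij g" using W_iso[OF g] isometry_def by blast
  have ig: "inv g (g u) = u" for u using bg by (simp add: bij_is_inj)
  have hi: "g (inv g u) = u" for u using bg by (simp add: bij_is_surj surj_f_inv_f)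
  have gq: "g q \<in> C \<inter> g ` C" using q by auto
  have 1: "g ` C \<subseteq> C"
    using components_maximal[OF C_comp connected_continuous_image[OF cont[OF g] C_conn] W_image_C[OF g]] gq
    by blast
  have "inv g (g q) \<in> inv g ` C" using q by (intro imageI)
  then have "inv g (g q) \<in> C \<inter> inv g ` C" using q ig by simp
  then have 2: "inv g ` C \<subseteq> C"
    using components_maximal[OF C_comp connected_continuous_image[OF cont[OF W_inv[OF g]] C_conn] W_image_C[OF W_inv[OF g]]]
    by blast
  have "C \<subseteq> g ` C"
  proof
    fix c assume "c \<in> C"
    then have "inv g c \<in> C" using 2 by blast
    then have "g (inv g c) \<in> g ` C" by (rule imageI)
    then show "c \<in> g ` C" using hi by simp
  qed
  then have "g ` C = C" using 1 by blast
  then have "g \<in> {g \<in> W. g ` C = C}" using g by blast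
  then show ?thesis using cd unfolding cocompact_discrete_refl_group_def by simp
qed

lemma half:
  assumes s: "s \<in> refls W"
  shows "components (- fixset s) = {Hp s, s ` Hp s}" "Hp s \<inter> s ` Hp s = {}"
    "open (Hp s)" "open (s ` Hp s)" "gconvex (Hp s)" "gconvex (s ` Hp s)"
    "s ` s ` Hp s = Hp s" "Hp s \<union> s ` Hp s = - fixset s" "C \<subseteq> Hp s"
proof -
  have rs: "reflection s" using refls_W[OF s] by blast
  obtain A B where AB: "components (- fixset s) = {A, B}" "A \<noteq> B" "A \<inter> B = {}"
    "open A" "open B" "gconvex A" "gconvex B" "s ` A = B" "s ` B = A" "A \<union> B = - fixset s"
    "A \<noteq> {}" "B \<noteq> {}" by (rule refl_parts[OF geo rs])
  have "fixset s \<subseteq> U" using s unfolding U_def by blast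
  then have Cs: "C \<subseteq> - fixset s" using C_sub by blast
  have nem: "- fixset s \<noteq> {}" using Cs C_ne by blast
  obtain K where K: "K \<in> components (- fixset s)" "C \<subseteq> K"
    using exists_component_superset[OF Cs nem C_conn] by blast
  have "(Hp s = A \<and> s ` Hp s = B) \<or> (Hp s = B \<and> s ` Hp s = A)"
  proof (cases "K = A")
    case True
    then have "\<not> C \<subseteq> B" using K AB(3) C_ne by blast
    then have "{K \<in> components (- fixset s). C \<subseteq> K} = {A}" using K True AB(1) by auto
    then have "Hp s = A" unfolding Hp_def halfspace_def by simp
    then show ?thesis using AB(8) by simp
  next
    case False
    then have "K = B" using K AB(1) by blast
    then have "\<not> C \<subseteq> A" using K AB(3) C_ne by blast
    then have "{K \<in> components (- fixset s). C \<subseteq> K} = {B}" using K \<open>K = B\<close> AB(1) by auto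
    then have "Hp s = B" unfolding Hp_def halfspace_def by simp
    then show ?thesis using AB(9) by simp
  qed
  moreover have "C \<subseteq> Hp s" unfolding Hp_def halfspace_def using K by blast
  ultimately show "components (- fixset s) = {Hp s, s ` Hp s}" "Hp s \<inter> s ` Hp s = {}"
    "open (Hp s)" "open (s ` Hp s)" "gconvex (Hp s)" "gconvex (s ` Hp s)"
    "s ` s ` Hp s = Hp s" "Hp s \<union> s ` Hp s = - fixset s" "C \<subseteq> Hp s"
  proof -
    assume "(Hp s = A \<and> s ` Hp s = B) \<or> (Hp s = B \<and> s ` Hp s = A)"
    then consider "Hp s = A" "s ` Hp s = B" | "Hp s = B" "s ` Hp s = A" by blast
    then show "components (- fixset s) = {Hp s, s ` Hp s}" "Hp s \<inter> s ` Hp s = {}"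
      "open (Hp s)" "open (s ` Hp s)" "gconvex (Hp s)" "gconvex (s ` Hp s)"
      "s ` s ` Hp s = Hp s" "Hp s \<union> s ` Hp s = - fixset s"
      by (cases; simp add: AB(1,3,4,5,6,7,8,9,10) insert_commute Int_commute Un_commute)+
  qed
qed

lemma chamber_side:
  assumes v: "v \<in> W" and s: "s \<in> refls W"
  shows "v ` C \<subseteq> Hp s \<or> v ` C \<subseteq> s ` Hp s"
proof -
  have "fixset s \<subseteq> U" using s unfolding U_def by blast
  then have vs: "v ` C \<subseteq> - fixset s" using W_image_C[OF v] by blast
  have vc: "connected (v ` C)"
    using connected_continuous_image[OF _ C_conn] isometry_cont[OF W_iso[OF v]] continuous_on_subset by blast
  have "- fixset s \<noteq> {}" using vs C_ne by blast
  then obtain K where K: "K \<in> components (- fixset s)" "v ` C \<subseteq> K"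
    using exists_component_superset[OF vs _ vc] by blast
  then show ?thesis using half(1)[OF s] by auto
qed

lemma closure_sep:
  assumes s: "s \<in> refls W"
  shows "closure (Hp s) \<inter> closure (s ` Hp s) \<subseteq> fixset s"
proof
  fix x assume x: "x \<in> closure (Hp s) \<inter> closure (s ` Hp s)"
  show "x \<in> fixset s"
  proof (rule ccontr)
    assume "x \<notin> fixset s"
    then have "x \<in> Hp s \<or> x \<in> s ` Hp s" using half(8)[OF s] by blast
    then show False
      using x half(2,3,4)[OF s] open_Int_closure_eq_empty
      by (metis Int_commute IntD1 IntD2 empty_iff IntI)
  qed
qed

end


lemma ball_avoid:
  fixes z :: "'a::metric_space"
  assumes "finite K" "\<forall>F\<in>K. closed F \<and> z \<notin> F"
  shows "\<exists>e>0. e \<le> 1 \<and> (\<forall>F\<in>K. ball z e \<inter> F = {})"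
proof -
  have "\<forall>F\<in>K. open (- F)" using assms(2) by (simp add: open_Compl)
  then have "open (\<Inter>F\<in>K. - F)" using assms(1) by (rule open_INT[rotated])
  moreover have "z \<in> (\<Inter>F\<in>K. - F)" using assms by auto
  ultimately obtain e where e: "e > 0" "ball z e \<subseteq> (\<Inter>F\<in>K. - F)" unfolding open_contains_ball by blast
  have "ball z (min e 1) \<subseteq> ball z e" by (rule subset_ball) simp
  then have "\<forall>F\<in>K. ball z (min e 1) \<inter> F = {}" using e(2) by blast
  moreover have "min e 1 > 0" "min e 1 \<le> (1::real)" using e(1) by auto
  ultimately show ?thesis by (intro exI[of _ "min e 1"] conjI)
qed

context rg
begin

lemma crux:
  assumes t: "t \<in> S" and r: "r \<in> refls W"
    and A: "A \<in> components (- fixset r)" and B: "B \<in> components (- fixset r)"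
    and AB: "A \<noteq> B" and CA: "C \<subseteq> A" and tCB: "t ` C \<subseteq> B"
  shows "r = t"
proof -
  have tR: "t \<in> refls W" using S_refls[OF t] .
  have rt: "reflection t" and tW: "t \<in> W" using refls_W[OF tR] by auto
  have rr: "reflection r" and rW: "r \<in> W" using refls_W[OF r] by auto
  have ABd: "A \<inter> B = {}" using components_nonoverlap[OF A B] AB by simp
  have rAB: "r ` A = B"
  proof -
    obtain A' B' where AB': "components (- fixset r) = {A', B'}" "r ` A' = B'" "r ` B' = A'"
      using rr unfolding reflection_def by (elim conjE exE) (rule that, assumption+)
    have "(A = A' \<and> B = B') \<or> (A = B' \<and> B = A')" using A B AB AB'(1) by auto
    then show ?thesis using AB'(2,3) by auto
  qed
  have tinv: "t (t x) = x" for x using refl_invol[OF rt] .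
  have rinv: "r (r x) = x" for x using refl_invol[OF rr] .
  have tiso: "dist (t x) (t y) = dist x y" for x y using refl_iso[OF rt] unfolding isometry_def by blast
  have riso: "dist (r x) (r y) = dist x y" for x y using refl_iso[OF rr] unfolding isometry_def by blast
  note Ht = half[OF tR]
  have "S - {t} \<subset> S" using t by blast
  then have "C \<noteq> (\<Inter>s\<in>S - {t}. halfspace s C)" using mg unfolding minimal_gens_def by blast
  moreover have "C \<subseteq> (\<Inter>s\<in>S - {t}. halfspace s C)" using half(9) S_refls unfolding Hp_def by blast
  ultimately obtain y where y: "\<forall>s\<in>S - {t}. y \<in> Hp s" "y \<notin> C" unfolding Hp_def by blast
  have yt: "y \<notin> Hp t" using y C_eq by auto
  obtain c where c: "c \<in> C" using C_ne by blast
  obtain \<gamma> where g: "geodesic_seg \<gamma> c y" using geo unfolding geodesic_space_def by blast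
  define d where "d = dist c y"
  have g0: "\<gamma> 0 = c" and gd: "\<gamma> d = y" using g unfolding geodesic_seg_def d_def by auto
  have gdist: "dist (\<gamma> a) (\<gamma> b) = \<bar>a - b\<bar>" if "a \<in> {0..d}" "b \<in> {0..d}" for a b
    using g that unfolding geodesic_seg_def d_def by blast
  have gc: "continuous_on {0..d} \<gamma>" using geodesic_cont[OF g] unfolding d_def .
  have seg: "\<gamma> ` {0..d} \<subseteq> Hp s" if "s \<in> S - {t}" for s
  proof -
    have "gconvex (Hp s)" using half(5) S_refls that by blast
    moreover have "c \<in> Hp s" using c half(9) S_refls that by blast
    ultimately show ?thesis using y(1) that g unfolding gconvex_def d_def by blast
  qed
  define Z where "Z = {0..d} \<inter> \<gamma> -` fixset t"
  have Zc: "closed Z" unfolding Z_def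
    by (rule continuous_closed_preimage[OF gc]) (auto intro: fixset_closed refl_iso rt)
  have cHt: "c \<in> Hp t" using c Ht(9) by blast
  have Hpt_comp: "Hp t \<in> components (- fixset t)" using Ht(1) by blast
  have Hpt_sub: "Hp t \<subseteq> - fixset t" using Ht(8) by blast
  have "Z \<noteq> {}"
  proof
    assume "Z = {}"
    then have sub: "\<gamma> ` {0..d} \<subseteq> - fixset t" unfolding Z_def by blast
    have "connected (\<gamma> ` {0..d})" using connected_continuous_image[OF gc] by simp
    moreover have "c \<in> Hp t \<inter> \<gamma> ` {0..d}" using cHt g0 d_def by force
    ultimately have "\<gamma> ` {0..d} \<subseteq> Hp t" using components_maximal[OF Hpt_comp _ sub] by blast
    moreover have "y \<in> \<gamma> ` {0..d}" using gd d_def by (intro image_eqI[of _ _ d]) auto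
    ultimately show False using yt by blast
  qed
  define \<tau> where "\<tau> = Inf Z"
  have tZ: "\<tau> \<in> Z" unfolding \<tau>_def
    by (rule closed_contains_Inf[OF \<open>Z \<noteq> {}\<close> _ Zc]) (auto simp: Z_def bdd_below_def)
  define z where "z = \<gamma> \<tau>"
  have zt: "z \<in> fixset t" and tau: "\<tau> \<in> {0..d}" using tZ unfolding Z_def z_def by auto
  have tz: "t z = z" using zt unfolding fixset_def by simp
  have "\<tau> \<noteq> 0"
  proof
    assume "\<tau> = 0" then have "c \<in> fixset t" using zt g0 z_def by simp
    then show False using cHt Hpt_sub by blast
  qed
  then have tpos: "\<tau> > 0" using tau by simp
  have before: "\<gamma> a \<notin> fixset t" if "a \<in> {0..<\<tau>}" for a
  proof
    assume "\<gamma> a \<in> fixset t"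
    then have "a \<in> Z" using that tau unfolding Z_def by auto
    then have "\<tau> \<le> a" unfolding \<tau>_def by (intro cInf_lower) (auto simp: bdd_below_def Z_def)
    then show False using that by simp
  qed
  have "\<gamma> ` {0..<\<tau>} \<subseteq> Hp t"
  proof -
    have sub: "\<gamma> ` {0..<\<tau>} \<subseteq> - fixset t" using before by blast
    have "connected (\<gamma> ` {0..<\<tau>})"
      by (rule connected_continuous_image[OF continuous_on_subset[OF gc]]) (use tau in auto)
    moreover have "c \<in> Hp t \<inter> \<gamma> ` {0..<\<tau>}" using cHt g0 tpos by force
    ultimately show ?thesis using components_maximal[OF Hpt_comp _ sub] by blast
  qed
  then have befC: "\<gamma> a \<in> C" if "a \<in> {0..<\<tau>}" for a
  proof -
    have "\<gamma> a \<in> Hp s" if "s \<in> S" for s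
    proof (cases "s = t")
      case True then show ?thesis using \<open>\<gamma> ` {0..<\<tau>} \<subseteq> Hp t\<close> \<open>a \<in> {0..<\<tau>}\<close> by blast
    next
      case False then show ?thesis using seg[of s] that \<open>a \<in> {0..<\<tau>}\<close> tau by auto
    qed
    then show ?thesis using C_eq by blast
  qed
  have near: "\<exists>p\<in>C. dist p z < e" if "e > 0" for e
  proof -
    define a where "a = max 0 (\<tau> - e / 2)"
    have a: "a \<in> {0..<\<tau>}" using tpos that unfolding a_def by auto
    have "dist (\<gamma> a) z = \<bar>a - \<tau>\<bar>" unfolding z_def using gdist a tau by auto
    also have "\<dots> < e" using that tpos unfolding a_def by auto
    finally show ?thesis using befC[OF a] by blast
  qed
  have zS: "z \<in> Hp s" if "s \<in> S - {t}" for s using seg[OF that] tau z_def by blast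
  \<comment> \<open>Step 4: local finiteness\<close>
  define Fin where "Fin = {g \<in> W. g z \<in> ball z 2}"
  have finF: "finite Fin" using cd unfolding cocompact_discrete_refl_group_def acts_properly_def Fin_def by auto
  have inFin: "s \<in> Fin" if "s \<in> W" "q \<in> fixset s" "q \<in> ball z 1" for s q
  proof -
    have "dist z (s z) \<le> dist z q + dist q (s z)" by (rule dist_triangle)
    also have "dist q (s z) = dist (s q) (s z)" using that(2) unfolding fixset_def by simp
    also have "\<dots> = dist q z" using W_iso[OF that(1)] unfolding isometry_def by blast
    finally have "dist z (s z) < 2" using that(3) by (simp add: dist_commute)
    then show ?thesis using that(1) unfolding Fin_def by simp
  qed
  define K where "K = fixset ` (Fin \<inter> (S - {t}))"
  have Kok: "\<forall>F\<in>K. closed F \<and> z \<notin> F"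
  proof
    fix F assume "F \<in> K"
    then obtain s where s: "s \<in> S - {t}" "F = fixset s" unfolding K_def by blast
    have "closed F" using s fixset_closed refl_iso refls_W S_refls by blast
    moreover have "z \<notin> F" using zS[OF s(1)] half(8)[OF S_refls] s by blast
    ultimately show "closed F \<and> z \<notin> F" by blast
  qed
  have finK: "finite K" unfolding K_def using finF by simp
  have ballgood: "ball z e \<inter> Hp t \<subseteq> C \<and> ball z e \<inter> t ` Hp t \<subseteq> t ` C"
    if e: "e \<le> 1" "\<forall>F\<in>K. ball z e \<inter> F = {}" for e
  proof -
    have avoid: "ball z e \<inter> fixset s = {}" if s: "s \<in> S - {t}" for s
    proof (cases "s \<in> Fin")
      case True then show ?thesis using e s unfolding K_def by blast
    next
      case False
      show ?thesis
      proof (rule ccontr)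
        assume "ball z e \<inter> fixset s \<noteq> {}"
        then obtain q where "q \<in> ball z e" "q \<in> fixset s" by blast
        then have "s \<in> Fin" using inFin[of s q] refls_W S_refls s e(1) by auto
        then show False using False by blast
      qed
    qed
    have inH: "ball z e \<subseteq> Hp s" if s: "s \<in> S - {t}" for s
    proof (cases "e > 0")
      case False then have "ball z e = {}" by auto
      then show ?thesis by (metis empty_subsetI)
    next
      case True
      have sub: "ball z e \<subseteq> - fixset s" using avoid[OF s] by blast
      have "Hp s \<in> components (- fixset s)" using half(1)[OF S_refls] s by blast
      moreover have "Hp s \<inter> ball z e \<noteq> {}" using True zS[OF s] by auto
      ultimately show ?thesis using components_maximal[OF _ ball_connected[OF geo] sub] by blast
    qed
    have 1: "ball z e \<inter> Hp t \<subseteq> C"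
    proof
      fix q assume q: "q \<in> ball z e \<inter> Hp t"
      have "q \<in> Hp s" if "s \<in> S" for s using inH[of s] q that by (cases "s = t") auto
      then show "q \<in> C" using C_eq by blast
    qed
    have "ball z e \<inter> t ` Hp t \<subseteq> t ` C"
    proof
      fix q assume q: "q \<in> ball z e \<inter> t ` Hp t"
      have "dist z (t q) = dist (t z) (t q)" using tz by simp
      then have "t q \<in> ball z e" using q tiso by simp
      moreover have "t q \<in> Hp t" using q Ht(7) by blast
      ultimately have "t q \<in> C" using 1 by blast
      then have "t (t q) \<in> t ` C" by (rule imageI)
      then show "q \<in> t ` C" using tinv by simp
    qed
    then show ?thesis using 1 by blast
  qed
  have rz: "r z = z"
  proof (rule ccontr)
    assume nz: "r z \<noteq> z"
    have "\<forall>F\<in>insert (fixset r) K. closed F \<and> z \<notin> F"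
      using Kok nz fixset_closed[OF refl_iso[OF rr]] unfolding fixset_def by auto
    then obtain e where e: "e > 0" "e \<le> 1" "\<forall>F\<in>insert (fixset r) K. ball z e \<inter> F = {}"
      using ball_avoid[of "insert (fixset r) K" z] finK by auto
    obtain p where p: "p \<in> C" "dist p z < e" using near[OF e(1)] by blast
    have sub: "ball z e \<subseteq> - fixset r" using e(3) by blast
    have "p \<in> A \<inter> ball z e" using p CA by (auto simp: dist_commute)
    then have "ball z e \<subseteq> A" using components_maximal[OF A ball_connected[OF geo] sub] by blast
    moreover have "t p \<in> ball z e" using p tiso[of p z] tz by (simp add: dist_commute)
    moreover have "t p \<in> B" using tCB p by blast
    ultimately show False using ABd by blast
  qed
  obtain e where e: "e > 0" "e \<le> 1" "\<forall>F\<in>K. ball z e \<inter> F = {}"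
    using ball_avoid[OF finK Kok] by blast
  note bg = ballgood[OF e(2,3)]
  define V where "V = ball z e \<inter> Hp t"
  have Vo: "open V" unfolding V_def using Ht(3) by blast
  obtain p where p: "p \<in> C" "dist p z < e" using near[OF e(1)] by blast
  have pV: "p \<in> V" unfolding V_def using p Ht(9) by (auto simp: dist_commute)
  have "\<exists>q\<in>V. r q \<notin> fixset t"
  proof (rule ccontr)
    assume "\<not> ?thesis"
    then have all: "\<forall>q\<in>V. r q \<in> fixset t" by blast
    have "open (r -` V)" using continuous_open_vimage[OF Vo isometry_contat[OF refl_iso[OF rr]]] .
    moreover have "r -` V \<subseteq> fixset t"
    proof
      fix x assume "x \<in> r -` V"
      then have "r (r x) \<in> fixset t" using all by blast
      then show "x \<in> fixset t" using rinv by simp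
    qed
    ultimately have "r -` V \<subseteq> interior (fixset t)" using interior_maximal by blast
    moreover have "r p \<in> r -` V" using pV rinv by simp
    moreover have "interior (fixset t) = {}" using rt unfolding reflection_def by blast
    ultimately show False by blast
  qed
  then obtain q where q: "q \<in> V" "r q \<notin> fixset t" by blast
  have qC: "q \<in> C" using q(1) bg unfolding V_def by blast
  have rqB: "r q \<in> B" using qC CA rAB by blast
  have rqball: "r q \<in> ball z e"
  proof -
    have "dist z (r q) = dist (r z) (r q)" using rz by simp
    then show ?thesis using q(1) riso unfolding V_def by simp
  qed
  have "r q \<notin> Hp t"
  proof
    assume "r q \<in> Hp t"
    then have "r q \<in> C" using rqball bg by blast
    then show False using rqB CA ABd by blast
  qed
  then have "r q \<in> t ` Hp t" using q(2) Ht(8) by blast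
  then have "r q \<in> t ` C" using rqball bg by blast
  then have tq: "(t \<circ> r) q \<in> C" using tinv by auto
  have "t \<circ> r = id" using W_chamber[OF W_comp[OF tW rW] qC tq] .
  then show "r = t" using tinv by (metis comp_apply id_apply ext)
qed

end


context rg
begin

lemma compose_W: "set l \<subseteq> S \<Longrightarrow> compose_list l \<in> W"
proof (induction l)
  case Nil then show ?case using W_id compose_list_Nil by metis
next
  case (Cons a l)
  then have "a \<in> W" using S_refls refls_W by auto
  moreover have "compose_list l \<in> W" using Cons by simp
  ultimately show ?case unfolding compose_list_Cons by (rule W_comp)
qed

lemma gallery:
  assumes s: "s \<in> S" and ts: "set ts \<subseteq> S" and nv: "\<not> (compose_list ts ` C \<subseteq> Hp s)"
  shows "\<exists>ts'. set ts' \<subseteq> S \<and> length ts' + 1 = length ts \<and> compose_list ts' = s \<circ> compose_list ts"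
proof -
  define P where "P i \<longleftrightarrow> compose_list (take i ts) ` C \<subseteq> Hp s" for i
  have sR: "s \<in> refls W" using S_refls[OF s] .
  have P0: "P 0" unfolding P_def using half(9)[OF sR] by (simp add: compose_list_Nil)
  have Pn: "\<not> P (length ts)" unfolding P_def using nv by simp
  have "\<exists>i<length ts. P i \<and> \<not> P (Suc i)"
  proof (rule ccontr)
    assume "\<not> ?thesis"
    then have step: "\<And>i. i < length ts \<Longrightarrow> P i \<Longrightarrow> P (Suc i)" by blast
    have "i \<le> length ts \<Longrightarrow> P i" for i
      by (induction i) (use P0 step in auto)
    then show False using Pn by blast
  qed
  then obtain i where i: "i < length ts" "P i" "\<not> P (Suc i)" by blast
  define g where "g = compose_list (take i ts)"
  define t where "t = ts ! i"
  define rest where "rest = compose_list (drop (Suc i) ts)"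
  have tS: "t \<in> S" using i(1) ts unfolding t_def using nth_mem by blast
  have tR: "t \<in> refls W" using S_refls[OF tS] .
  have rt: "reflection t" and tW: "t \<in> W" using refls_W[OF tR] by auto
  have gW: "g \<in> W" unfolding g_def using ts set_take_subset compose_W by (metis order_trans)
  have tsplit: "ts = take i ts @ t # drop (Suc i) ts" unfolding t_def using i(1) by (simp add: id_take_nth_drop)
  have tsuc: "take (Suc i) ts = take i ts @ [t]" unfolding t_def using i(1) by (simp add: take_Suc_conv_app_nth)
  have cSuc: "compose_list (take (Suc i) ts) = g \<circ> t"
    unfolding tsuc g_def by (simp add: compose_list_append compose_list_Cons compose_list_Nil)
  have cts: "compose_list ts = g \<circ> t \<circ> rest"
    using tsplit unfolding g_def rest_def
    by (metis compose_list_append compose_list_Cons comp_assoc)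
  have gC: "g ` C \<subseteq> Hp s" using i(2) unfolding P_def g_def .
  have gtC: "(g \<circ> t) ` C \<subseteq> s ` Hp s"
    using chamber_side[OF W_comp[OF gW tW] sR] i(3) unfolding P_def cSuc by blast
  have bg: "bij g" using W_iso[OF gW] isometry_def by blast
  have ig: "inv g (g u) = u" for u using bg by (simp add: bij_is_inj)
  have gi: "g (inv g u) = u" for u using bg by (simp add: bij_is_surj surj_f_inv_f)
  have iig: "inv (inv g) = g" using bg by (simp add: inv_inv_eq)
  have bi: "bij (inv g)" using bg by (simp add: bij_imp_bij_inv)
  define r where "r = inv g \<circ> s \<circ> inv (inv g)"
  have rr: "reflection r" unfolding r_def
    using refl_conj[OF _ W_iso[OF W_inv[OF gW]]] refls_W[OF sR] by blast
  have "inv g \<circ> s \<circ> g \<in> W" using refls_W[OF sR] by (intro W_comp W_inv gW) auto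
  then have rW: "r \<in> W" unfolding r_def iig .
  have rR: "r \<in> refls W" using rr rW unfolding refls_def by blast
  have fxr: "fixset r = inv g ` fixset s" unfolding r_def by (rule fixset_conj[OF bi])
  have cmp: "- fixset r = inv g ` (- fixset s)" using fxr bi by (simp add: bij_image_Compl_eq)
  have comps: "components (- fixset r) = {inv g ` Hp s, inv g ` (s ` Hp s)}"
    using cmp components_homeo[OF W_iso[OF W_inv[OF gW]], of "- fixset s"] half(1)[OF sR] by simp
  have Hne: "Hp s \<noteq> s ` Hp s" using half(2,9)[OF sR] C_ne by blast
  have AB: "inv g ` Hp s \<noteq> inv g ` (s ` Hp s)" using Hne bi by (simp add: bij_is_inj inj_image_eq_iff)
  have CA: "C \<subseteq> inv g ` Hp s"
  proof
    fix c assume "c \<in> C"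
    then have "g c \<in> Hp s" using gC by blast
    then have "inv g (g c) \<in> inv g ` Hp s" by (rule imageI)
    then show "c \<in> inv g ` Hp s" using ig by simp
  qed
  have tCB: "t ` C \<subseteq> inv g ` (s ` Hp s)"
  proof
    fix c assume "c \<in> t ` C"
    then have "g c \<in> s ` Hp s" using gtC by auto
    then have "inv g (g c) \<in> inv g ` (s ` Hp s)" by (rule imageI)
    then show "c \<in> inv g ` (s ` Hp s)" using ig by simp
  qed
  have "r = t" using crux[OF tS rR _ _ AB CA tCB] comps by simp
  then have rt': "inv g (s (g x)) = t x" for x unfolding r_def iig by (metis comp_apply)
  have sg: "s = g \<circ> t \<circ> inv g"
  proof
    fix x
    have "inv g (s (g (inv g x))) = t (inv g x)" by (rule rt')
    then have "g (inv g (s x)) = g (t (inv g x))" using gi by simp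
    then show "s x = (g \<circ> t \<circ> inv g) x" using gi by simp
  qed
  have tinv: "t (t x) = x" for x using refl_invol[OF rt] .
  have "s \<circ> compose_list ts = g \<circ> rest"
    unfolding sg cts using ig tinv by (simp add: fun_eq_iff)
  moreover have "compose_list (take i ts @ drop (Suc i) ts) = g \<circ> rest"
    unfolding g_def rest_def by (simp add: compose_list_append)
  moreover have "set (take i ts @ drop (Suc i) ts) \<subseteq> S"
    using ts set_take_subset set_drop_subset by (metis set_append Un_subset_iff order_trans)
  moreover have "length (take i ts @ drop (Suc i) ts) + 1 = length ts" using i(1) by simp
  ultimately show ?thesis by metis
qed

lemma hard:
  "set ss \<subseteq> S \<Longrightarrow> length ss = word_length S (compose_list ss) \<Longrightarrow> x \<in> closure C
   \<Longrightarrow> x \<in> compose_list ss ` closure C \<Longrightarrow> \<forall>t\<in>set ss. t x = x"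
proof (induction ss)
  case Nil then show ?case by simp
next
  case (Cons s1 rest)
  define u where "u = compose_list rest"
  define w where "w = compose_list (s1 # rest)"
  have w: "w = s1 \<circ> u" unfolding w_def u_def by (simp add: compose_list_Cons)
  have s1: "s1 \<in> S" and restS: "set rest \<subseteq> S" using Cons.prems(1) by auto
  have sR: "s1 \<in> refls W" using S_refls[OF s1] .
  have rs: "reflection s1" and sW: "s1 \<in> W" using refls_W[OF sR] by auto
  have sinv: "s1 (s1 x) = x" for x using refl_invol[OF rs] .
  have uW: "u \<in> W" unfolding u_def using compose_W[OF restS] .
  have wW: "w \<in> W" unfolding w_def using compose_W Cons.prems(1) by blast
  have red: "length (s1 # rest) = word_length S w" using Cons.prems(2) unfolding w_def .
  have red2: "length rest = word_length S u"
  proof (rule ccontr)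
    assume ne: "length rest \<noteq> word_length S u"
    have le: "word_length S u \<le> length rest" using word_length_le[OF restS] u_def by simp
    have "\<exists>l. length l = word_length S u \<and> set l \<subseteq> S \<and> compose_list l = u"
      unfolding word_length_def by (rule LeastI_ex) (use restS u_def in blast)
    then obtain l where l: "length l = word_length S u" "set l \<subseteq> S" "compose_list l = u" by blast
    have "set (s1 # l) \<subseteq> S" using l s1 by simp
    moreover have "compose_list (s1 # l) = w" using l w by (simp add: compose_list_Cons)
    ultimately have "word_length S w \<le> length (s1 # l)" using word_length_le by blast
    then show False using red l ne le by simp
  qed
  have wside: "w ` C \<subseteq> s1 ` Hp s1"
  proof (rule ccontr)
    assume nn: "\<not> ?thesis"
    then have wH: "w ` C \<subseteq> Hp s1" using chamber_side[OF wW sR] by blast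
    have "u = s1 \<circ> w" using w sinv by (simp add: fun_eq_iff)
    then have "u ` C = s1 ` (w ` C)" by (simp add: image_comp)
    then have uC: "u ` C \<subseteq> s1 ` Hp s1" using wH by blast
    have "\<not> (u ` C \<subseteq> Hp s1)"
    proof
      assume "u ` C \<subseteq> Hp s1"
      then have "u ` C \<subseteq> Hp s1 \<inter> s1 ` Hp s1" using uC by blast
      then show False using half(2)[OF sR] C_ne by blast
    qed
    then obtain ts' where ts': "set ts' \<subseteq> S" "length ts' + 1 = length rest" "compose_list ts' = s1 \<circ> u"
      using gallery[OF s1 restS] unfolding u_def by blast
    have "word_length S w \<le> length ts'" using word_length_le[OF ts'(1)] ts'(3) w by simp
    then show False using red ts'(2) by simp
  qed
  have cw: "continuous_on X w" for X
    using isometry_cont[OF W_iso[OF wW]] continuous_on_subset by blast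
  have "w ` closure C \<subseteq> closure (s1 ` Hp s1)"
    by (rule image_closure_subset[OF cw closed_closure]) (use wside closure_subset in blast)
  then have x1: "x \<in> closure (s1 ` Hp s1)" using Cons.prems(4) unfolding w_def by blast
  have x2: "x \<in> closure (Hp s1)" using Cons.prems(3) closure_mono[OF half(9)[OF sR]] by blast
  have fx: "s1 x = x" using closure_sep[OF sR] x1 x2 unfolding fixset_def by blast
  obtain y where y: "y \<in> closure C" "x = w y" using Cons.prems(4) unfolding w_def by blast
  have "x = u y" using y fx w sinv by (metis comp_apply)
  then have "x \<in> compose_list rest ` closure C" using y(1) unfolding u_def by blast
  then have "\<forall>t\<in>set rest. t x = x"
    using Cons.IH[OF restS _ Cons.prems(3)] red2 unfolding u_def by blast
  then show ?case using fx by simp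
qed

lemma wall_face: "t \<in> S \<Longrightarrow> fixset t \<inter> closure C = t ` closure C \<inter> closure C"
proof -
  assume t: "t \<in> S"
  have tR: "t \<in> refls W" using S_refls[OF t] .
  have rt: "reflection t" and tW: "t \<in> W" using refls_W[OF tR] by auto
  have ct: "continuous_on X t" for X
    using isometry_cont[OF refl_iso[OF rt]] continuous_on_subset by blast
  show ?thesis
  proof
    show "fixset t \<inter> closure C \<subseteq> t ` closure C \<inter> closure C"
    proof
      fix x assume x: "x \<in> fixset t \<inter> closure C"
      then have "t x = x" unfolding fixset_def by simp
      then show "x \<in> t ` closure C \<inter> closure C" using x by (metis IntD2 IntI image_eqI)
    qed
    show "t ` closure C \<inter> closure C \<subseteq> fixset t \<inter> closure C"
    proof
      fix x assume x: "x \<in> t ` closure C \<inter> closure C"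
      have "t ` C \<subseteq> t ` Hp t" using half(9)[OF tR] by blast
      then have "t ` closure C \<subseteq> closure (t ` Hp t)"
        by (intro image_closure_subset[OF ct closed_closure]) (use closure_subset in blast)
      then have x1: "x \<in> closure (t ` Hp t)" using x by blast
      have x2: "x \<in> closure (Hp t)" using x closure_mono[OF half(9)[OF tR]] by blast
      show "x \<in> fixset t \<inter> closure C" using closure_sep[OF tR] x1 x2 x by blast
    qed
  qed
qed

end



theorem lemma3p1:
  fixes W :: "('a::metric_space \<Rightarrow> 'a) set" and C :: "'a set"
    and S :: "('a \<Rightarrow> 'a) set" and w :: "'a \<Rightarrow> 'a" and ss :: "('a \<Rightarrow> 'a) list"
  assumes "CAT0 TYPE('a)"
    and "cocompact_discrete_refl_group W C"
    and "minimal_gens W C S"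
    and "w \<in> W"
    and "set ss \<subseteq> S" and "compose_list ss = w" and "length ss = word_length S w"
  shows "closure C \<inter> w ` closure C = closure C \<inter> (\<Inter>t\<in>set ss. fixset t \<inter> closure C)
       \<and> closure C \<inter> (\<Inter>t\<in>set ss. fixset t \<inter> closure C)
           = closure C \<inter> (\<Inter>t\<in>set ss. t ` closure C \<inter> closure C)
       \<and> closure C \<inter> (\<Inter>t\<in>set ss. t ` closure C \<inter> closure C)
           = (\<Inter>v\<in>gen_group (set ss). v ` closure C)"
proof -
  have geo: "geodesic_space TYPE('a)" using assms(1) unfolding CAT0_def by blast
  interpret rg W C S using geo assms(2,3) by unfold_locales
  have ssS: "set ss \<subseteq> S" by fact
  have reflG: "\<forall>g\<in>set ss. reflection g" using ssS S_refls refls_W by blast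
  have E2: "closure C \<inter> (\<Inter>t\<in>set ss. fixset t \<inter> closure C)
           = closure C \<inter> (\<Inter>t\<in>set ss. t ` closure C \<inter> closure C)"
  proof -
    have "fixset t \<inter> closure C = t ` closure C \<inter> closure C" if "t \<in> set ss" for t
      by (rule wall_face) (use ssS that in blast)
    then have "(\<Inter>t\<in>set ss. fixset t \<inter> closure C) = (\<Inter>t\<in>set ss. t ` closure C \<inter> closure C)"
      by (rule INF_cong[OF refl])
    then show ?thesis by (rule arg_cong)
  qed
  have E1: "closure C \<inter> w ` closure C = closure C \<inter> (\<Inter>t\<in>set ss. fixset t \<inter> closure C)"
  proof
    show "closure C \<inter> w ` closure C \<subseteq> closure C \<inter> (\<Inter>t\<in>set ss. fixset t \<inter> closure C)"
    proof
      fix x assume x: "x \<in> closure C \<inter> w ` closure C"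
      have len: "length ss = word_length S (compose_list ss)" using assms(6,7) by simp
      have x1: "x \<in> closure C" using x by (rule IntD1)
      have "x \<in> w ` closure C" using x by (rule IntD2)
      then have x2: "x \<in> compose_list ss ` closure C" using assms(6) by simp
      have fx: "\<forall>t\<in>set ss. t x = x" by (rule hard[OF ssS len x1 x2])
      have hx: "x \<in> fixset t \<inter> closure C" if "t \<in> set ss" for t
        using fx that x1 unfolding fixset_def by simp
      show "x \<in> closure C \<inter> (\<Inter>t\<in>set ss. fixset t \<inter> closure C)"
        by (intro hx IntI INT_I x1)
    qed
    show "closure C \<inter> (\<Inter>t\<in>set ss. fixset t \<inter> closure C) \<subseteq> closure C \<inter> w ` closure C"
    proof
      fix x assume x: "x \<in> closure C \<inter> (\<Inter>t\<in>set ss. fixset t \<inter> closure C)"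
      have xc: "x \<in> closure C" using x by (rule IntD1)
      have "\<forall>t\<in>set ss. t x = x"
      proof
        fix t assume "t \<in> set ss"
        moreover have "x \<in> (\<Inter>t\<in>set ss. fixset t \<inter> closure C)" using x by (rule IntD2)
        ultimately have "x \<in> fixset t \<inter> closure C" by (metis INT_D)
        then have "x \<in> fixset t" by (rule IntD1)
        then show "t x = x" unfolding fixset_def by simp
      qed
      then have "compose_list ss x = x" by (rule compose_list_fix)
      then have wx: "w x = x" using assms(6) by simp
      have "w x \<in> w ` closure C" using xc by (rule imageI)
      then show "x \<in> closure C \<inter> w ` closure C" using xc wx by simp
    qed
  qed
  have E3: "closure C \<inter> (\<Inter>t\<in>set ss. fixset t \<inter> closure C)
           = (\<Inter>v\<in>gen_group (set ss). v ` closure C)"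
  proof
    show "closure C \<inter> (\<Inter>t\<in>set ss. fixset t \<inter> closure C) \<subseteq> (\<Inter>v\<in>gen_group (set ss). v ` closure C)"
    proof
      fix x assume x: "x \<in> closure C \<inter> (\<Inter>t\<in>set ss. fixset t \<inter> closure C)"
      have fx: "\<forall>t\<in>set ss. t x = x"
      proof
        fix t assume "t \<in> set ss"
        moreover have "x \<in> (\<Inter>t\<in>set ss. fixset t \<inter> closure C)" using x by (rule IntD2)
        ultimately have "x \<in> fixset t \<inter> closure C" by (metis INT_D)
        then have "x \<in> fixset t" by (rule IntD1)
        then show "t x = x" unfolding fixset_def by simp
      qed
      show "x \<in> (\<Inter>v\<in>gen_group (set ss). v ` closure C)"
      proof
        fix v assume "v \<in> gen_group (set ss)"
        then have "v x = x" using gen_group_fix[OF reflG fx] by blast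
        moreover have "x \<in> closure C" using x by blast
        then have "v x \<in> v ` closure C" by (rule imageI)
        ultimately show "x \<in> v ` closure C" by simp
      qed
    qed
    show "(\<Inter>v\<in>gen_group (set ss). v ` closure C) \<subseteq> closure C \<inter> (\<Inter>t\<in>set ss. fixset t \<inter> closure C)"
    proof
      fix x assume x: "x \<in> (\<Inter>v\<in>gen_group (set ss). v ` closure C)"
      have "x \<in> id ` closure C" by (rule INT_D[OF x gen_group.gen_id])
      then have xc: "x \<in> closure C" by simp
      have "x \<in> t ` closure C \<inter> closure C" if "t \<in> set ss" for t
      proof -
        have "x \<in> t ` closure C" by (rule INT_D[OF x gen_group_gen[OF that]])
        then show ?thesis using xc by simp
      qed
      then have "x \<in> closure C \<inter> (\<Inter>t\<in>set ss. t ` closure C \<inter> closure C)" using xc by blast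
      then show "x \<in> closure C \<inter> (\<Inter>t\<in>set ss. fixset t \<inter> closure C)" using E2 by simp
    qed
  qed
  show ?thesis using E1 E2 E3 by (intro conjI) (simp_all only:)
qed


end
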